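(* Let $\alpha>1$, $r=\frac12(1-\frac1\alpha)$, let $a,b$ be positive integers with $s=a+b\ge2$, and let $n'_*=\lfloor -\log_r (s-1)\rfloor+1$. Then for every positive even integer $k$ with \[ k\ \ge\ \max\Bigg\{\left\lceil 2\,\frac{(1-r+r^{n'_*})^{s-2}\,[\,(1-r+r^{n'_*})+(s-1)\,]}{(1-r)^{s-2}\,[\,(1-r)+(s-1)(1-r^{n'_*})\,]}+2\right\rceil\Big(\frac{1-r}{r}\Big)^{s-1},\ \ 2\Big(\frac{1-r}{r}\Big)^{s},\ \ 2\Big(\frac1{1-r}\Big)^{s-1}+2\Bigg\}, \] we have \[ \Big[0,\tfrac k2\Big]=\{x_1^ax_2^b+x_3^ax_4^b+\cdots+x_{k-1}^ax_k^b:\ x_1,\dots,x_k\in C_\alpha\}. \]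
   Context: For real $\alpha>1$ let $r=\frac12(1-\frac1\alpha)\in(0,\frac12)$. Define $f_0,f_1:[0,1]\to[0,1]$ by $f_0(x)=rx$, $f_1(x)=rx+1-r$; for $\omega=\sigma_1\cdots\sigma_n\in\{0,1\}^n$ let $f_\omega=f_{\sigma_1}\circ\cdots\circ f_{\sigma_n}$. Let $F_n=\{f_\omega([0,1]):\omega\in\{0,1\}^n\}$ (the level-$n$ basic intervals, each of length $r^n$), $C_n=\bigcup_{I\in F_n}I$, and $C_\alpha=\bigcap_{n\ge1}C_n$ (the middle-$\frac1\alpha$ Cantor set; $C_3$ is the ternary Cantor set). *)

theory Defs
  imports Complex_Main
begin

definition cantor_ratio :: "real \<Rightarrow> real" where
  "cantor_ratio \<alpha> = (1 - 1 / \<alpha>) / 2"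

definition cantor_map :: "real \<Rightarrow> bool \<Rightarrow> real \<Rightarrow> real" where
  "cantor_map r \<sigma> x = (if \<sigma> then r * x + 1 - r else r * x)"

fun cantor_word :: "real \<Rightarrow> bool list \<Rightarrow> real \<Rightarrow> real" where
  "cantor_word r [] x = x"
| "cantor_word r (\<sigma> # \<omega>) x = cantor_map r \<sigma> (cantor_word r \<omega> x)"

definition basic_intervals :: "real \<Rightarrow> nat \<Rightarrow> real set set" where
  "basic_intervals r n = {cantor_word r \<omega> ` {0..1} | \<omega>. length \<omega> = n}"

definition cantor_level :: "real \<Rightarrow> nat \<Rightarrow> real set" where
  "cantor_level r n = \<Union> (basic_intervals r n)"

definition cantor_set :: "real \<Rightarrow> real set" where
  "cantor_set \<alpha> = (\<Inter>n\<in>{1..}. cantor_level (cantor_ratio \<alpha>) n)"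

end

theory Submission
  imports Defs "HOL-Analysis.Analysis"
begin

lemma cw_affine: "cantor_word r w x = cantor_word r w 0 + r ^ length w * x"
  by (induction w) (auto simp: cantor_map_def algebra_simps)

lemma cw_append: "cantor_word r (xs @ ys) x = cantor_word r xs (cantor_word r ys x)"
  by (induction xs) auto

lemma cw_01:
  assumes "0 < r" "r \<le> 1" "0 \<le> x" "x \<le> 1"
  shows "0 \<le> cantor_word r w x \<and> cantor_word r w x \<le> 1"
  using assms
proof (induction w)
  case Nil then show ?case by simp
next
  case (Cons a w)
  then have h: "0 \<le> cantor_word r w x" "cantor_word r w x \<le> 1" by auto
  have "r * cantor_word r w x \<le> r" using h assms by (simp add: mult_left_le)
  moreover have "0 \<le> r * cantor_word r w x" using h assms by simp
  ultimately show ?case using h assms unfolding cantor_word.simps cantor_map_def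
    by (smt (verit))
qed

lemma mem_level: "z \<in> cantor_level r n \<longleftrightarrow> (\<exists>w t. length w = n \<and> 0 \<le> t \<and> t \<le> 1 \<and> z = cantor_word r w t)"
  unfolding cantor_level_def basic_intervals_def by fastforce

lemma level_0: "cantor_level r 0 = {0..1}"
  by (auto simp: mem_level)

lemma level_Suc: "cantor_level r (Suc n) = cantor_map r False ` cantor_level r n \<union> cantor_map r True ` cantor_level r n"
proof (intro equalityI subsetI)
  fix z assume "z \<in> cantor_level r (Suc n)"
  then obtain w t where w: "length w = Suc n" "0 \<le> t" "t \<le> 1" "z = cantor_word r w t" by (auto simp: mem_level)
  then obtain s w' where "w = s # w'" by (cases w) auto
  with w have "z = cantor_map r s (cantor_word r w' t)" "cantor_word r w' t \<in> cantor_level r n"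
    by (auto simp: mem_level)
  then show "z \<in> cantor_map r False ` cantor_level r n \<union> cantor_map r True ` cantor_level r n"
    by (cases s) auto
next
  fix z assume "z \<in> cantor_map r False ` cantor_level r n \<union> cantor_map r True ` cantor_level r n"
  then obtain s z' where z: "z = cantor_map r s z'" "z' \<in> cantor_level r n" by blast
  then obtain w t where "length w = n" "0 \<le> t" "t \<le> 1" "z' = cantor_word r w t" by (auto simp: mem_level)
  then show "z \<in> cantor_level r (Suc n)" unfolding mem_level using z
    by (intro exI[of _ "s # w"] exI[of _ t]) auto
qed


locale cr =
  fixes r :: real
  assumes r0: "0 < r" and r2: "r < 1/2"
begin

abbreviation "C \<equiv> cantor_level r"
abbreviation "cw \<equiv> cantor_word r"
abbreviation "f \<equiv> cantor_map r"

lemma r1: "r < 1" using r2 by simp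
lemma rr: "r < 1 - r" using r2 by simp

lemma f_F: "f False z = r * z" by (simp add: cantor_map_def)
lemma f_T: "f True z = r * z + 1 - r" by (simp add: cantor_map_def)

lemma cw_Cons: "cw (s # w) t = f s (cw w t)" by simp

lemma cw01: "0 \<le> t \<Longrightarrow> t \<le> 1 \<Longrightarrow> 0 \<le> cw w t \<and> cw w t \<le> 1"
  using cw_01[of r t w] r0 r1 by auto

lemma cw_1: "cw w 1 = cw w 0 + r ^ length w"
  using cw_affine[of r w 1] by simp

lemma level_01: "C n \<subseteq> {0..1}"
  using cw01 by (auto simp: mem_level)

lemma level_Suc_sub: "C (Suc n) \<subseteq> C n"
proof (induction n)
  case 0
  have "f s z \<in> {0..1}" if "z \<in> {0..1}" for s z
  proof -
    have "0 \<le> r * z" "r * z \<le> r" using that r0 by (auto simp: mult_left_le)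
    then show ?thesis using r1 by (cases s) (auto simp: f_F f_T)
  qed
  then show ?case by (auto simp: level_Suc level_0)
next
  case (Suc n)
  have "C (Suc (Suc n)) = f False ` C (Suc n) \<union> f True ` C (Suc n)" by (rule level_Suc)
  moreover have "C (Suc n) = f False ` C n \<union> f True ` C n" by (rule level_Suc)
  ultimately show ?case using Suc.IH by (metis image_mono Un_mono)
qed

lemma level_antimono: "n \<le> N \<Longrightarrow> C N \<subseteq> C n"
  by (induction N rule: dec_induct) (use level_Suc_sub in blast)+

lemma compact_level: "compact (C n)"
proof (induction n)
  case 0 then show ?case by (simp add: level_0)
next
  case (Suc n)
  have c: "continuous_on UNIV (f s)" for s
    by (cases s) (auto simp: f_F f_T intro!: continuous_intros)
  show ?case unfolding level_Suc
    by (intro compact_Un compact_continuous_image continuous_on_subset[OF c] Suc) auto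
qed

lemma closed_level: "closed (C n)"
  using compact_level compact_imp_closed by blast

lemma cw_rep_F: "cw (replicate k False) t = r ^ k * t"
  by (induction k) (auto simp: f_F)

lemma cw_rep_T: "cw (replicate k True) t = 1 - r ^ k + r ^ k * t"
proof (induction k)
  case (Suc k)
  have "cw (replicate (Suc k) True) t = r * cw (replicate k True) t + 1 - r" by (simp add: f_T)
  also have "\<dots> = r * (1 - r ^ k + r ^ k * t) + 1 - r" by (simp only: Suc.IH)
  finally show ?case by (simp add: algebra_simps)
qed simp

lemma left_seg:
  assumes "length w \<le> N" "0 \<le> t" "t \<le> 1"
  shows "cw w 0 + r ^ N * t \<in> C N"
proof -
  let ?w = "w @ replicate (N - length w) False"
  have "cw ?w t = cw w 0 + r ^ length w * (r ^ (N - length w) * t)"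
    by (simp add: cw_append cw_rep_F cw_affine[of r w "r ^ (N - length w) * t"])
  also have "\<dots> = cw w 0 + r ^ N * t"
    using assms(1) by (simp add: power_add[symmetric] mult.assoc[symmetric])
  finally show ?thesis unfolding mem_level using assms by (intro exI[of _ ?w] exI[of _ t]) auto
qed

lemma right_seg:
  assumes "length w \<le> N" "0 \<le> t" "t \<le> 1"
  shows "cw w 1 - r ^ N * t \<in> C N"
proof -
  let ?w = "w @ replicate (N - length w) True"
  have "cw ?w (1 - t) = cw w 0 + r ^ length w * (1 - r ^ (N - length w) + r ^ (N - length w) * (1 - t))"
    by (simp add: cw_append cw_rep_T cw_affine[of r w "1 - r ^ (N - length w) + r ^ (N - length w) * (1 - t)"])
  also have "\<dots> = cw w 1 - r ^ N * t"
    using assms(1) by (simp add: cw_1 algebra_simps power_add[symmetric])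
  finally show ?thesis unfolding mem_level using assms by (intro exI[of _ ?w] exI[of _ "1 - t"]) auto
qed

lemma endpoints:
  assumes "length w \<le> N"
  shows "cw w 0 \<in> C N" "cw w 1 \<in> C N"
  using left_seg[OF assms, of 0] right_seg[OF assms, of 0] by auto

end


context cr
begin

lemma f_strict: "x < y \<Longrightarrow> f s x < f s y"
  using r0 by (cases s) (auto simp: f_F f_T)

lemma f_le_iff: "f s x < f s y \<longleftrightarrow> x < y"
  using r0 by (cases s) (auto simp: f_F f_T)

lemma level_Suc_mem: "z \<in> C (Suc N) \<longleftrightarrow> (\<exists>s y. y \<in> C N \<and> z = f s y)"
  unfolding level_Suc image_iff Un_iff by (metis (full_types))

lemma gap_free:
  assumes "length w < N" "cw w r < z" "z < cw w (1 - r)"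
  shows "z \<notin> C N"
  using assms
proof (induction w arbitrary: N z)
  case Nil
  then obtain N' where N: "N = Suc N'" by (cases N) auto
  show ?case
  proof
    assume "z \<in> C N"
    then obtain s y where y: "y \<in> C N'" "z = f s y" using N level_Suc_mem by blast
    have "y \<in> {0..1}" using y(1) level_01 by blast
    then have "0 \<le> y" "y \<le> 1" by auto
    then have "0 \<le> r * y" "r * y \<le> r" using r0 by (auto simp: mult_left_le)
    then show False using Nil y by (cases s) (auto simp: f_F f_T)
  qed
next
  case (Cons s w)
  then obtain N' where N: "N = Suc N'" "length w < N'" by (cases N) auto
  show ?case
  proof
    assume "z \<in> C N"
    then obtain s' y where y: "y \<in> C N'" "z = f s' y" using N level_Suc_mem by blast
    have "y \<in> {0..1}" using y(1) level_01 by blast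
    then have y01: "0 \<le> y" "y \<le> 1" by auto
    have b: "0 \<le> cw w r" "cw w (1 - r) \<le> 1" using cw01[of r w] cw01[of "1 - r" w] r0 r1 by auto
    show False
    proof (cases "s' = s")
      case True
      then have "cw w r < y" "y < cw w (1 - r)" using Cons.prems y by (auto simp: f_le_iff)
      then show False using Cons.IH[OF N(2)] y by blast
    next
      case False
      have "0 \<le> r * y" "r * y \<le> r" "0 \<le> r * cw w r" "r * cw w (1 - r) \<le> r"
        using r0 y01 b by (auto simp: mult_left_le)
      then show False using False Cons.prems y rr by (cases s; cases s') (auto simp: f_F f_T)
    qed
  qed
qed

lemma avoid_in_level:
  assumes "0 \<le> x" "x \<le> 1" "\<And>w. length w < N \<Longrightarrow> \<not> (cw w r < x \<and> x < cw w (1 - r))"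
  shows "x \<in> C N"
  using assms
proof (induction N arbitrary: x)
  case 0 then show ?case by (simp add: level_0)
next
  case (Suc N)
  have "\<not> (r < x \<and> x < 1 - r)" using Suc.prems(3)[of "[]"] by simp
  then consider "x \<le> r" | "1 - r \<le> x" by linarith
  then show ?case
  proof cases
    case 1
    define y where "y = x / r"
    have xy: "x = f False y" using r0 by (simp add: y_def f_F)
    have "y \<in> C N"
    proof (rule Suc.IH)
      show "0 \<le> y" "y \<le> 1" using 1 Suc.prems r0 by (auto simp: y_def)
      fix w :: "bool list" assume "length w < N"
      then have "\<not> (cw (False # w) r < x \<and> x < cw (False # w) (1 - r))" using Suc.prems(3)[of "False # w"] by (simp del: cantor_word.simps)
      then show "\<not> (cw w r < y \<and> y < cw w (1 - r))" unfolding xy cw_Cons f_le_iff .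
    qed
    then show ?thesis using xy level_Suc_mem by blast
  next
    case 2
    define y where "y = (x - (1 - r)) / r"
    have xy: "x = f True y" using r0 by (simp add: y_def f_T)
    have "y \<in> C N"
    proof (rule Suc.IH)
      show "0 \<le> y" "y \<le> 1" using 2 Suc.prems r0 by (auto simp: y_def)
      fix w :: "bool list" assume "length w < N"
      then have "\<not> (cw (True # w) r < x \<and> x < cw (True # w) (1 - r))" using Suc.prems(3)[of "True # w"] by (simp del: cantor_word.simps)
      then show "\<not> (cw w r < y \<and> y < cw w (1 - r))" unfolding xy cw_Cons f_le_iff .
    qed
    then show ?thesis using xy level_Suc_mem by blast
  qed
qed

lemma free_len0:
  assumes "c < d" "0 \<le> c" "d \<le> 1" "\<And>z. c < z \<Longrightarrow> z < d \<Longrightarrow> z \<notin> C N"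
  shows "d - c \<le> 1 - 2 * r"
  using assms
proof (induction N arbitrary: c d)
  case 0
  then show ?case using 0(4)[of "(c+d)/2"] by (auto simp: level_0)
next
  case (Suc N)
  have "r \<in> C (Suc N)" "1 - r \<in> C (Suc N)"
    using endpoints(2)[of "[False]" "Suc N"] endpoints(1)[of "[True]" "Suc N"] by (auto simp: f_F f_T)
  then have nr: "\<not> (c < r \<and> r < d)" "\<not> (c < 1 - r \<and> 1 - r < d)" using Suc.prems(4) by blast+
  consider "d \<le> r" | "1 - r \<le> c" | "r \<le> c" "d \<le> 1 - r" using nr by linarith
  then show ?case
  proof cases
    case 1
    have "d / r - c / r \<le> 1 - 2 * r"
    proof (rule Suc.IH)
      show "c / r < d / r" "0 \<le> c / r" "d / r \<le> 1" using Suc.prems 1 r0 by (auto simp: divide_strict_right_mono)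
      fix z assume "c / r < z" "z < d / r"
      then have "c < r * z" "r * z < d" using r0 by (auto simp: field_simps)
      then have "f False z \<notin> C (Suc N)" using Suc.prems(4) by (simp add: f_F)
      then show "z \<notin> C N" using level_Suc_mem by blast
    qed
    then have "(d - c) / r \<le> 1 - 2 * r" by (simp add: diff_divide_distrib)
    then have "d - c \<le> r * (1 - 2 * r)" using r0 by (simp add: pos_divide_le_eq mult.commute)
    also have "\<dots> \<le> 1 - 2 * r" using r0 r2 by (simp add: mult_left_le_one_le)
    finally show ?thesis .
  next
    case 2
    have "(d - (1 - r)) / r - (c - (1 - r)) / r \<le> 1 - 2 * r"
    proof (rule Suc.IH)
      show "(c - (1 - r)) / r < (d - (1 - r)) / r" "0 \<le> (c - (1 - r)) / r" "(d - (1 - r)) / r \<le> 1"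
        using Suc.prems 2 r0 by (auto simp: divide_strict_right_mono)
      fix z assume "(c - (1 - r)) / r < z" "z < (d - (1 - r)) / r"
      then have "c < r * z + 1 - r" "r * z + 1 - r < d" using r0 by (auto simp: field_simps)
      then have "f True z \<notin> C (Suc N)" using Suc.prems(4) by (simp add: f_T)
      then show "z \<notin> C N" using level_Suc_mem by blast
    qed
    then have "(d - c) / r \<le> 1 - 2 * r" by (simp add: diff_divide_distrib)
    then have "d - c \<le> r * (1 - 2 * r)" using r0 by (simp add: pos_divide_le_eq mult.commute)
    also have "\<dots> \<le> 1 - 2 * r" using r0 r2 by (simp add: mult_left_le_one_le)
    finally show ?thesis .
  next
    case 3 then show ?thesis by linarith
  qed
qed

lemma free_len:
  assumes "length w \<le> N" "c < d" "cw w 0 \<le> c" "d \<le> cw w 1" "\<And>z. c < z \<Longrightarrow> z < d \<Longrightarrow> z \<notin> C N"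
  shows "d - c \<le> (1 - 2 * r) * r ^ length w"
  using assms
proof (induction w arbitrary: N c d)
  case Nil
  then show ?case using free_len0[of c d N] by simp
next
  case (Cons s w)
  then obtain N' where N: "N = Suc N'" "length w \<le> N'" by (cases N) auto
  define g where "g z = (z - (if s then 1 - r else 0)) / r" for z
  have fg: "f s (g z) = z" for z using r0 by (cases s) (auto simp: g_def f_F f_T)
  have gf: "g (f s z) = z" for z using r0 by (cases s) (auto simp: g_def f_F f_T)
  have gmono: "x < y \<Longrightarrow> g x < g y" for x y using r0 by (auto simp: g_def divide_strict_right_mono)
  have gmono': "x \<le> y \<Longrightarrow> g x \<le> g y" for x y using r0 by (auto simp: g_def divide_right_mono)
  have "g d - g c \<le> (1 - 2 * r) * r ^ length w"
  proof (rule Cons.IH[OF N(2)])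
    show "g c < g d" using Cons.prems gmono by blast
    show "cw w 0 \<le> g c" using gmono'[OF Cons.prems(3)] by (simp add: gf)
    show "g d \<le> cw w 1" using gmono'[OF Cons.prems(4)] by (simp add: gf)
    fix z assume z: "g c < z" "z < g d"
    have "c < f s z" "f s z < d" using f_strict[OF z(1), of s] f_strict[OF z(2), of s] by (simp_all add: fg)
    then have "f s z \<notin> C N" using Cons.prems(5) by blast
    then show "z \<notin> C N'" using N level_Suc_mem by blast
  qed
  moreover have "g d - g c = (d - c) / r" by (simp add: g_def diff_divide_distrib)
  ultimately show ?case using r0 by (simp add: field_simps)
qed

end


lemma diff_pow_mono:
  fixes x y h :: real
  assumes "0 \<le> x" "x \<le> y" "0 \<le> h"
  shows "(x + h) ^ n - x ^ n \<le> (y + h) ^ n - y ^ n"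
proof (cases n)
  case 0 then show ?thesis by simp
next
  case (Suc m)
  have "(x + h) ^ Suc m - x ^ Suc m = h * (\<Sum>p<Suc m. (x + h) ^ p * x ^ (m - p))"
    using diff_power_eq_sum[of "x + h" m x] by simp
  also have "\<dots> \<le> h * (\<Sum>p<Suc m. (y + h) ^ p * y ^ (m - p))"
    using assms by (intro mult_left_mono sum_mono mult_mono power_mono) auto
  also have "\<dots> = (y + h) ^ Suc m - y ^ Suc m"
    using diff_power_eq_sum[of "y + h" m y] by simp
  finally show ?thesis using Suc by simp
qed

context cr
begin

definition rho :: real where "rho = r / (1 - r)"
definition tau :: "nat \<Rightarrow> real" where "tau s = rho ^ s / (1 - rho ^ s)"

lemma rho_pos: "0 < rho" and rho1: "rho < 1"
  using r0 rr by (auto simp: rho_def)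

lemma rho_pow: "0 < rho ^ s" "rho ^ s \<le> 1"
  using rho_pos rho1 by (auto intro: power_le_one)

lemma tau_nonneg: "s > 0 \<Longrightarrow> 0 \<le> tau s"
  using rho_pos rho1 power_strict_decreasing[of 0 s rho] by (auto simp: tau_def)

lemma analytic_A:
  assumes "0 \<le> u" "0 \<le> L"
  shows "(u + r * L) ^ s - u ^ s \<le> (u + L) ^ s - (u + (1 - r) * L) ^ s"
proof -
  have "0 \<le> (1 - r) * L" "0 \<le> r * L" using assms r0 r1 by auto
  then have "(u + r * L) ^ s - u ^ s \<le> (u + (1 - r) * L + r * L) ^ s - (u + (1 - r) * L) ^ s"
    using diff_pow_mono[of u "u + (1 - r) * L" "r * L" s] assms by simp
  also have "u + (1 - r) * L + r * L = u + L" by (simp add: algebra_simps)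
  finally show ?thesis .
qed

lemma analytic_B:
  assumes "0 \<le> u" "0 \<le> L" "0 < s"
  shows "tau s * ((u + (1 - r) * L) ^ s - (u + r * L) ^ s) \<le> (u + r * L) ^ s - u ^ s"
proof -
  let ?l = "(u + r * L) ^ s - u ^ s" and ?G = "(u + (1 - r) * L) ^ s - (u + r * L) ^ s"
  have "(r * u + r * (1 - r) * L) ^ s - (r * u) ^ s \<le> ((1 - r) * u + r * (1 - r) * L) ^ s - ((1 - r) * u) ^ s"
  proof (rule diff_pow_mono)
    show "r * u \<le> (1 - r) * u" using assms rr by (intro mult_right_mono) auto
  qed (use assms r0 r1 in auto)
  moreover have "r * u + r * (1 - r) * L = r * (u + (1 - r) * L)" "(1 - r) * u + r * (1 - r) * L = (1 - r) * (u + r * L)"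
    by (simp_all add: algebra_simps)
  ultimately have "r ^ s * (u + (1 - r) * L) ^ s - r ^ s * u ^ s \<le> (1 - r) ^ s * (u + r * L) ^ s - (1 - r) ^ s * u ^ s"
    by (simp only: power_mult_distrib)
  then have "r ^ s * (?l + ?G) \<le> (1 - r) ^ s * ?l"
    by (simp add: algebra_simps)
  then have "rho ^ s * (?l + ?G) \<le> ?l"
    using r0 r1 by (simp add: rho_def power_divide divide_simps mult.commute)
  then have "rho ^ s * ?G \<le> (1 - rho ^ s) * ?l" by (simp add: algebra_simps)
  moreover have "0 < 1 - rho ^ s" using rho_pos rho1 power_strict_decreasing[of 0 s rho] assms by auto
  ultimately show ?thesis by (simp add: tau_def divide_simps mult.commute)
qed

definition Gp :: "nat \<Rightarrow> bool list \<Rightarrow> real" where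
  "Gp s w = (cw w (1 - r)) ^ s - (cw w r) ^ s"

lemma cw_r: "cw w r = cw w 0 + r ^ length w * r" and cw_1r: "cw w (1 - r) = cw w 0 + r ^ length w * (1 - r)"
  using cw_affine[of r w r] cw_affine[of r w "1 - r"] by auto

lemma cw0_nonneg: "0 \<le> cw w 0" using cw01[of 0 w] by simp
lemma cw1_le: "cw w 1 \<le> 1" using cw01[of 1 w] by simp

lemma lft_ge: "0 < s \<Longrightarrow> tau s * Gp s w \<le> (cw w r) ^ s - (cw w 0) ^ s"
  using analytic_B[of "cw w 0" "r ^ length w" s] cw0_nonneg r0
  by (simp add: Gp_def cw_r cw_1r mult.commute)

lemma rgt_ge: "(cw w r) ^ s - (cw w 0) ^ s \<le> (cw w 1) ^ s - (cw w (1 - r)) ^ s"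
  using analytic_A[of "cw w 0" "r ^ length w" s] cw0_nonneg r0
  by (simp add: cw_r cw_1r cw_1 mult.commute)

lemma cw_snoc: "cw (w @ [s]) t = cw w (f s t)" by (simp add: cw_append)

lemma gap_lt: "cw w r < cw w (1 - r)"
  using rr r0 by (simp add: cw_r cw_1r)

lemma gap_len: "cw w (1 - r) - cw w r = (1 - 2 * r) * r ^ length w"
  by (simp add: cw_r cw_1r algebra_simps)

lemma pow_le_exp: "r ^ a \<le> r ^ b \<Longrightarrow> b \<le> a"
  using r0 r1 by simp

lemma pow_mono_s: "0 \<le> x \<Longrightarrow> x \<le> y \<Longrightarrow> x ^ s \<le> (y::real) ^ s"
  by (rule power_mono)

end


context cr
begin

lemma snocT0: "cw (w @ [True]) 0 = cw w (1 - r)" by (simp add: cw_snoc f_T)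
lemma snocT1: "cw (w @ [True]) 1 = cw w 1" by (simp add: cw_snoc f_T)
lemma snocF0: "cw (w @ [False]) 0 = cw w 0" by (simp add: cw_snoc f_F)
lemma snocF1: "cw (w @ [False]) 1 = cw w r" by (simp add: cw_snoc f_F)

lemma TPR:
  assumes w: "length w < N" and db: "cw w (1 - r) < b" and b1: "b \<le> 1" and s: "0 < s"
    and bc: "b = 1 \<or> (\<exists>w'. length w' < N \<and> b = cw w' r \<and> Gp s w \<le> Gp s w')"
  shows "tau s * Gp s w \<le> b ^ s - (cw w (1 - r)) ^ s"
proof -
  let ?d = "cw w (1 - r)" and ?q = "cw w 1" and ?c = "cw w r"
  have d0: "0 \<le> ?d" using cw01[of "1 - r" w] r0 r1 by auto
  show ?thesis
  proof (cases "?q \<le> b")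
    case True
    have "tau s * Gp s w \<le> ?c ^ s - (cw w 0) ^ s" by (rule lft_ge[OF s])
    also have "\<dots> \<le> ?q ^ s - ?d ^ s" by (rule rgt_ge)
    also have "\<dots> \<le> b ^ s - ?d ^ s"
      using True power_mono[of ?q b s] cw01[of 1 w] by auto
    finally show ?thesis .
  next
    case False
    then have "b \<noteq> 1" using cw1_le by auto
    with bc obtain w' where w': "length w' < N" "b = cw w' r" "Gp s w \<le> Gp s w'" by blast
    let ?p = "cw w' 0" and ?b' = "cw w' (1 - r)"
    have "?d \<le> ?p"
    proof (rule ccontr)
      assume pd: "\<not> ?d \<le> ?p"
      have qC: "?q \<in> C N" using endpoints(2)[of w N] w by simp
      have "?b' \<le> ?q"
      proof (rule ccontr)
        assume "\<not> ?b' \<le> ?q"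
        then have "?q \<notin> C N" using gap_free[OF w'(1), of ?q] False w'(2) by auto
        then show False using qC by blast
      qed
      have "?b' - b \<le> (1 - 2 * r) * r ^ length (w @ [True])"
      proof (rule free_len)
        show "length (w @ [True]) \<le> N" using w by simp
        show "b < ?b'" using w'(2) gap_lt by simp
        show "cw (w @ [True]) 0 \<le> b" using db snocT0 by simp
        show "?b' \<le> cw (w @ [True]) 1" using snocT1 \<open>?b' \<le> ?q\<close> by simp
        fix z assume "b < z" "z < ?b'"
        then show "z \<notin> C N" using gap_free[OF w'(1)] w'(2) by simp
      qed
      then have "r ^ length w' \<le> r ^ (length w + 1)" using gap_len[of w'] w'(2) rr by simp
      then have k: "length w + 1 \<le> length w'" by (rule pow_le_exp)
      have pC: "?p \<in> C N" using endpoints(1)[of w' N] w' by simp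
      have "?p \<le> ?c"
      proof (rule ccontr)
        assume "\<not> ?p \<le> ?c"
        then have "?p \<notin> C N" using gap_free[OF w, of ?p] pd by auto
        then show False using pC by blast
      qed
      have "?d - ?c \<le> (1 - 2 * r) * r ^ length (w' @ [False])"
      proof (rule free_len)
        show "length (w' @ [False]) \<le> N" using w' by simp
        show "?c < ?d" by (rule gap_lt)
        show "cw (w' @ [False]) 0 \<le> ?c" using snocF0 \<open>?p \<le> ?c\<close> by simp
        show "?d \<le> cw (w' @ [False]) 1" using snocF1 db w'(2) by simp
        fix z assume "?c < z" "z < ?d"
        then show "z \<notin> C N" using gap_free[OF w] by simp
      qed
      then have "r ^ length w \<le> r ^ (length w' + 1)" using gap_len[of w] rr by simp
      then have "length w' + 1 \<le> length w" by (rule pow_le_exp)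
      with k show False by simp
    qed
    have "tau s * Gp s w \<le> tau s * Gp s w'" by (intro mult_left_mono) (use w'(3) tau_nonneg[OF s] in auto)
    also have "\<dots> \<le> b ^ s - ?p ^ s" using lft_ge[OF s, of w'] w'(2) by simp
    also have "\<dots> \<le> b ^ s - ?d ^ s" using power_mono[OF \<open>?d \<le> ?p\<close> d0] by simp
    finally show ?thesis .
  qed
qed

lemma TPL:
  assumes w: "length w < N" and a0: "0 \<le> a" and ac: "a < cw w r" and s: "0 < s"
    and bc: "a = 0 \<or> (\<exists>w'. length w' < N \<and> a = cw w' (1 - r) \<and> Gp s w \<le> Gp s w')"
  shows "tau s * Gp s w \<le> (cw w r) ^ s - a ^ s"
proof -
  let ?d = "cw w (1 - r)" and ?p0 = "cw w 0" and ?c = "cw w r"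
  show ?thesis
  proof (cases "a \<le> ?p0")
    case True
    have "tau s * Gp s w \<le> ?c ^ s - ?p0 ^ s" by (rule lft_ge[OF s])
    also have "\<dots> \<le> ?c ^ s - a ^ s" using True power_mono[of a ?p0 s] a0 by auto
    finally show ?thesis .
  next
    case False
    then have "a \<noteq> 0" using cw0_nonneg[of w] by auto
    with bc obtain w' where w': "length w' < N" "a = cw w' (1 - r)" "Gp s w \<le> Gp s w'" by blast
    let ?q' = "cw w' 1" and ?a'' = "cw w' r"
    have "?q' \<le> ?c"
    proof (rule ccontr)
      assume cq: "\<not> ?q' \<le> ?c"
      have p0C: "?p0 \<in> C N" using endpoints(1)[of w N] w by simp
      have "?p0 \<le> ?a''"
      proof (rule ccontr)
        assume "\<not> ?p0 \<le> ?a''"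
        then have "?p0 \<notin> C N" using gap_free[OF w'(1), of ?p0] False w'(2) by auto
        then show False using p0C by blast
      qed
      have "a - ?a'' \<le> (1 - 2 * r) * r ^ length (w @ [False])"
      proof (rule free_len)
        show "length (w @ [False]) \<le> N" using w by simp
        show "?a'' < a" using w'(2) gap_lt by simp
        show "cw (w @ [False]) 0 \<le> ?a''" using snocF0 \<open>?p0 \<le> ?a''\<close> by simp
        show "a \<le> cw (w @ [False]) 1" using snocF1 ac by simp
        fix z assume "?a'' < z" "z < a"
        then show "z \<notin> C N" using gap_free[OF w'(1)] w'(2) by simp
      qed
      then have "r ^ length w' \<le> r ^ (length w + 1)" using gap_len[of w'] w'(2) rr by simp
      then have k: "length w + 1 \<le> length w'" by (rule pow_le_exp)
      have qC: "?q' \<in> C N" using endpoints(2)[of w' N] w' by simp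
      have "?d \<le> ?q'"
      proof (rule ccontr)
        assume "\<not> ?d \<le> ?q'"
        then have "?q' \<notin> C N" using gap_free[OF w, of ?q'] cq by auto
        then show False using qC by blast
      qed
      have "?d - ?c \<le> (1 - 2 * r) * r ^ length (w' @ [True])"
      proof (rule free_len)
        show "length (w' @ [True]) \<le> N" using w' by simp
        show "?c < ?d" by (rule gap_lt)
        show "cw (w' @ [True]) 0 \<le> ?c" using snocT0 ac w'(2) by simp
        show "?d \<le> cw (w' @ [True]) 1" using snocT1 \<open>?d \<le> ?q'\<close> by simp
        fix z assume "?c < z" "z < ?d"
        then show "z \<notin> C N" using gap_free[OF w] by simp
      qed
      then have "r ^ length w \<le> r ^ (length w' + 1)" using gap_len[of w] rr by simp
      then have "length w' + 1 \<le> length w" by (rule pow_le_exp)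
      with k show False by simp
    qed
    have a'0: "0 \<le> a" by (rule a0)
    have "tau s * Gp s w \<le> tau s * Gp s w'" by (intro mult_left_mono) (use w'(3) tau_nonneg[OF s] in auto)
    also have "\<dots> \<le> ?a'' ^ s - (cw w' 0) ^ s" using lft_ge[OF s, of w'] by simp
    also have "\<dots> \<le> ?q' ^ s - a ^ s" using rgt_ge[of w' s] w'(2) by simp
    also have "\<dots> \<le> ?c ^ s - a ^ s" using power_mono[OF \<open>?q' \<le> ?c\<close>, of s] cw01[of 1 w'] by auto
    finally show ?thesis .
  qed
qed

lemma endpoints_distinct:
  assumes "length w < N" "length w' < N"
  shows "cw w' r \<noteq> cw w (1 - r)"
proof
  assume eq: "cw w' r = cw w (1 - r)"
  let ?p = "cw w (1 - r)" and ?b = "cw w' (1 - r)"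
  have pb: "?p < ?b" using gap_lt[of w'] eq by simp
  define t where "t = min 1 ((?b - ?p) / r ^ N) / 2"
  have rN: "0 < r ^ N" using r0 by simp
  have "0 < (?b - ?p) / r ^ N" using pb rN by simp
  then have t0: "0 < t" by (simp add: t_def)
  have t1: "t \<le> 1" by (auto simp: t_def)
  have "t \<le> (?b - ?p) / r ^ N / 2" unfolding t_def by (intro divide_right_mono min.cobounded2) auto
  then have "r ^ N * t \<le> r ^ N * ((?b - ?p) / r ^ N / 2)" using rN by (intro mult_left_mono) auto
  also have "r ^ N * ((?b - ?p) / r ^ N / 2) = (?b - ?p) / 2"
    using rN by (metis (no_types, lifting) nonzero_mult_div_cancel_left order_less_irrefl times_divide_eq_right)
  finally have "r ^ N * t \<le> (?b - ?p) / 2" .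
  then have "r ^ N * t < ?b - ?p" using pb by simp
  have "cw (w @ [True]) 0 + r ^ N * t \<in> C N" using left_seg[of "w @ [True]" N t] assms t0 t1 by simp
  moreover have "cw (w @ [True]) 0 + r ^ N * t \<notin> C N"
    using gap_free[OF assms(2)] eq snocT0 \<open>r ^ N * t < ?b - ?p\<close> rN t0 by simp
  ultimately show False by blast
qed

end


lemma sum_upd:
  fixes m i :: nat and f :: "nat \<Rightarrow> 'b"
  assumes "i < m"
  shows "(\<Sum>j<m. g ((f(i := v)) j)) = (\<Sum>j<m. g (f j)) - g (f i) + (g v :: real)"
proof -
  have "(\<Sum>j<m. g ((f(i := v)) j)) = g v + (\<Sum>j\<in>{..<m} - {i}. g ((f(i := v)) j))"
    using assms by (subst sum.remove[of _ i]) auto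
  also have "(\<Sum>j\<in>{..<m} - {i}. g ((f(i := v)) j)) = (\<Sum>j\<in>{..<m} - {i}. g (f j))"
    by (rule sum.cong) auto
  also have "\<dots> = (\<Sum>j<m. g (f j)) - g (f i)"
    using assms by (subst sum.remove[of "{..<m}" i]) auto
  finally show ?thesis by simp
qed

lemma finite_argmax:
  fixes G :: "'a \<Rightarrow> real"
  assumes "finite S" "S \<noteq> {}"
  obtains p where "p \<in> S" "\<And>q. q \<in> S \<Longrightarrow> G q \<le> G p"
proof -
  have "Max (G ` S) \<in> G ` S" using assms by simp
  then obtain p where "p \<in> S" "G p = Max (G ` S)" by auto
  moreover have "G q \<le> Max (G ` S)" if "q \<in> S" for q using assms that by simp
  ultimately show ?thesis using that by metis
qed

locale nh =
  fixes h :: "real \<Rightarrow> real" and F :: "(real \<times> real) set" and m :: nat and \<tau> :: real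
  assumes finF: "finite F"
    and Fb: "\<And>c d. (c, d) \<in> F \<Longrightarrow> 0 < c \<and> c < d \<and> d < 1"
    and Fdist: "\<And>c d c' d'. (c, d) \<in> F \<Longrightarrow> (c', d') \<in> F \<Longrightarrow> c' \<noteq> d"
    and Fend: "\<And>c d c' d'. (c, d) \<in> F \<Longrightarrow> (c', d') \<in> F \<Longrightarrow> \<not> (c < c' \<and> c' < d) \<and> \<not> (c < d' \<and> d' < d)"
    and hc: "continuous_on {0..1} h"
    and hm: "\<And>x y. 0 \<le> x \<Longrightarrow> x \<le> y \<Longrightarrow> y \<le> 1 \<Longrightarrow> h x \<le> h y"
    and h0: "h 0 = 0" and h1: "h 1 = 1"
    and TR: "\<And>c d b. (c, d) \<in> F \<Longrightarrow> d < b \<Longrightarrow> b \<le> 1 \<Longrightarrow>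
              (b = 1 \<or> (\<exists>d'. (b, d') \<in> F \<and> h d - h c \<le> h d' - h b)) \<Longrightarrow> \<tau> * (h d - h c) \<le> h b - h d"
    and TL: "\<And>c d a. (c, d) \<in> F \<Longrightarrow> 0 \<le> a \<Longrightarrow> a < c \<Longrightarrow>
              (a = 0 \<or> (\<exists>c'. (c', a) \<in> F \<and> h d - h c \<le> h a - h c')) \<Longrightarrow> \<tau> * (h d - h c) \<le> h c - h a"
    and m2: "2 \<le> m" and mt: "1 \<le> real (m - 1) * min 1 \<tau>"
begin

lemma tau_pos: "0 < \<tau>"
proof (rule ccontr)
  assume "\<not> 0 < \<tau>"
  then have "min 1 \<tau> \<le> 0" by simp
  then have "real (m - 1) * min 1 \<tau> \<le> 0" by (intro mult_nonneg_nonpos) auto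
  then show False using mt by linarith
qed

definition ins :: "(nat \<Rightarrow> real) \<Rightarrow> (nat \<Rightarrow> real) \<Rightarrow> (nat \<times> (real \<times> real)) set" where
  "ins a b = {(j, g). j < m \<and> g \<in> F \<and> a j \<le> fst g \<and> snd g \<le> b j}"

lemma fin_ins: "finite (ins a b)"
proof -
  have "ins a b \<subseteq> {..<m} \<times> F" by (auto simp: ins_def)
  then show ?thesis using finF finite_subset by blast
qed

definition inv :: "(nat \<Rightarrow> real) \<Rightarrow> (nat \<Rightarrow> real) \<Rightarrow> real \<Rightarrow> real \<Rightarrow> bool" where
  "inv a b M y \<longleftrightarrow>
    (\<forall>j<m. 0 \<le> a j \<and> a j \<le> b j \<and> b j \<le> 1) \<and>
    (\<forall>j<m. a j = 0 \<or> (\<exists>c. (c, a j) \<in> F \<and> M \<le> h (a j) - h c)) \<and>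
    (\<forall>j<m. b j = 1 \<or> (\<exists>d. (b j, d) \<in> F \<and> M \<le> h d - h (b j))) \<and>
    (\<forall>j<m. (a j = 0 \<and> b j = 1) \<or> \<tau> * M \<le> h (b j) - h (a j)) \<and>
    (\<forall>j<m. \<forall>c d. (c, d) \<in> F \<longrightarrow> a j \<le> c \<longrightarrow> d \<le> b j \<longrightarrow> h d - h c \<le> M) \<and>
    (\<Sum>j<m. h (a j)) \<le> y \<and> y \<le> (\<Sum>j<m. h (b j))"

definition good :: "real \<Rightarrow> (nat \<Rightarrow> real) \<Rightarrow> bool" where
  "good y x \<longleftrightarrow> (\<forall>j<m. 0 \<le> x j \<and> x j \<le> 1 \<and> (\<forall>c d. (c, d) \<in> F \<longrightarrow> \<not> (c < x j \<and> x j < d))) \<and>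
                 (\<Sum>j<m. h (x j)) = y"

lemma final:
  assumes I: "inv a b M y" and E: "ins a b = {}"
  shows "\<exists>x. good y x"
proof -
  have ab: "\<forall>j<m. 0 \<le> a j \<and> a j \<le> b j \<and> b j \<le> 1" using I by (simp add: inv_def)
  define \<phi> where "\<phi> t = (\<Sum>j<m. h (a j + t * (b j - a j)))" for t
  have cont: "continuous_on {0..1} \<phi>"
    unfolding \<phi>_def
  proof (intro continuous_on_sum)
    fix j assume j: "j \<in> {..<m}"
    have "(\<lambda>t. a j + t * (b j - a j)) ` {0..1} \<subseteq> {0..1}"
    proof
      fix z assume "z \<in> (\<lambda>t. a j + t * (b j - a j)) ` {0..1}"
      then obtain t where t: "0 \<le> t" "t \<le> 1" "z = a j + t * (b j - a j)" by auto
      have "0 \<le> t * (b j - a j)" "t * (b j - a j) \<le> b j - a j"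
        using t ab j by (auto simp: mult_left_le_one_le)
      then show "z \<in> {0..1}" using t ab j by auto
    qed
    then show "continuous_on {0..1} (\<lambda>t. h (a j + t * (b j - a j)))"
      by (intro continuous_on_compose2[OF hc]) (auto intro!: continuous_intros)
  qed
  have "\<phi> 0 \<le> y" "y \<le> \<phi> 1" using I by (auto simp: inv_def \<phi>_def)
  then obtain t where t: "0 \<le> t" "t \<le> 1" "\<phi> t = y" using IVT'[of \<phi> 0 y 1] cont by auto
  define x where "x j = a j + t * (b j - a j)" for j
  have xab: "a j \<le> x j \<and> x j \<le> b j" if "j < m" for j
  proof -
    have "0 \<le> t * (b j - a j)" "t * (b j - a j) \<le> b j - a j"
      using t ab that by (auto simp: mult_left_le_one_le)
    then show ?thesis by (auto simp: x_def)
  qed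
  have "good y x"
    unfolding good_def
  proof (intro conjI allI impI)
    fix j assume j: "j < m"
    show "0 \<le> x j" "x j \<le> 1" using xab[OF j] ab j by auto
    fix c d assume cd: "(c, d) \<in> F"
    show "\<not> (c < x j \<and> x j < d)"
    proof
      assume cx: "c < x j \<and> x j < d"
      have "(j, (c, d)) \<notin> ins a b" using E by simp
      then have "\<not> (a j \<le> c \<and> d \<le> b j)" using j cd by (simp add: ins_def)
      then consider "c < a j" | "b j < d" by linarith
      then show False
      proof cases
        case 1
        have "a j = 0 \<or> (\<exists>c'. (c', a j) \<in> F \<and> M \<le> h (a j) - h c')" using I j by (simp add: inv_def)
        then show False
        proof
          assume "a j = 0" then show False using 1 Fb[OF cd] by simp
        next
          assume "\<exists>c'. (c', a j) \<in> F \<and> M \<le> h (a j) - h c'"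
          then obtain c' where "(c', a j) \<in> F" by blast
          then show False using Fend[OF cd, of c' "a j"] 1 cx xab[OF j] by linarith
        qed
      next
        case 2
        have "b j = 1 \<or> (\<exists>d'. (b j, d') \<in> F \<and> M \<le> h d' - h (b j))" using I j by (simp add: inv_def)
        then show False
        proof
          assume "b j = 1" then show False using 2 Fb[OF cd] by simp
        next
          assume "\<exists>d'. (b j, d') \<in> F \<and> M \<le> h d' - h (b j)"
          then obtain d' where "(b j, d') \<in> F" by blast
          then show False using Fend[OF cd, of "b j" d'] 2 cx xab[OF j] by linarith
        qed
      qed
    qed
  next
    show "(\<Sum>j<m. h (x j)) = y" using t by (simp add: \<phi>_def x_def)
  qed
  then show ?thesis by blast
qed

end


context nh
begin

lemma step_exists:
  assumes "inv a b M y"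
  shows "\<exists>x. good y x"
  using assms
proof (induction "card (ins a b)" arbitrary: a b M rule: less_induct)
  case less
  show ?case
  proof (cases "ins a b = {}")
    case True then show ?thesis using final less.prems by blast
  next
    case False
    obtain p where p: "p \<in> ins a b" "\<And>q. q \<in> ins a b \<Longrightarrow> (\<lambda>(j, c, d). h d - h c) q \<le> (\<lambda>(j, c, d). h d - h c) p"
      using finite_argmax[OF fin_ins False] by blast
    obtain i c d where pid: "p = (i, (c, d))" by (cases p) auto
    from p(1) have i: "i < m" "(c, d) \<in> F" "a i \<le> c" "d \<le> b i" by (auto simp: pid ins_def)
    define G where "G = h d - h c"
    have maxG: "h d2 - h c2 \<le> G" if "j < m" "(c2, d2) \<in> F" "a j \<le> c2" "d2 \<le> b j" for j c2 d2
      using p(2)[of "(j, (c2, d2))"] that by (auto simp: ins_def pid G_def)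
    from less.prems have
      I1: "\<forall>j<m. 0 \<le> a j \<and> a j \<le> b j \<and> b j \<le> 1" and
      I2: "\<forall>j<m. a j = 0 \<or> (\<exists>c. (c, a j) \<in> F \<and> M \<le> h (a j) - h c)" and
      I3: "\<forall>j<m. b j = 1 \<or> (\<exists>d. (b j, d) \<in> F \<and> M \<le> h d - h (b j))" and
      I4: "\<forall>j<m. (a j = 0 \<and> b j = 1) \<or> \<tau> * M \<le> h (b j) - h (a j)" and
      I5: "\<forall>j<m. \<forall>c d. (c, d) \<in> F \<longrightarrow> a j \<le> c \<longrightarrow> d \<le> b j \<longrightarrow> h d - h c \<le> M" and
      I6: "(\<Sum>j<m. h (a j)) \<le> y" "y \<le> (\<Sum>j<m. h (b j))"
      unfolding inv_def by blast+
    have cd: "0 < c" "c < d" "d < 1" using Fb[OF i(2)] by auto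
    have G0: "0 \<le> G" using hm[of c d] cd by (simp add: G_def)
    have G1: "G \<le> 1" using hm[of d 1] hm[of 0 c] cd h0 h1 by (simp add: G_def)
    have GM: "G \<le> M" using I5 i by (simp add: G_def)
    have tau0: "0 \<le> \<tau>" using tau_pos by simp
    have tauGM: "\<tau> * G \<le> \<tau> * M" using GM tau0 by (intro mult_left_mono)
    have lenj: "min 1 \<tau> * G \<le> h (b j) - h (a j)" if "j < m" for j
    proof -
      have "min 1 \<tau> * G \<le> \<tau> * G" using G0 by (intro mult_right_mono) auto
      moreover have "min 1 \<tau> * G \<le> 1 * G" using G0 by (intro mult_right_mono) auto
      ultimately show ?thesis using I4 that tauGM G1 h0 h1 by auto
    qed
    have sumcond: "G \<le> (\<Sum>j\<in>{..<m} - {i}. h (b j) - h (a j))"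
    proof -
      have "real (card ({..<m} - {i})) * (min 1 \<tau> * G) \<le> (\<Sum>j\<in>{..<m} - {i}. h (b j) - h (a j))"
        by (rule sum_bounded_below) (use lenj in auto)
      moreover have "card ({..<m} - {i}) = m - 1" using i by simp
      moreover have "G \<le> real (m - 1) * (min 1 \<tau> * G)"
        using mult_right_mono[OF mt G0] by (simp add: mult.assoc)
      ultimately show ?thesis by simp
    qed
    have split: "(\<Sum>j<m. h (b j)) - (\<Sum>j<m. h (a j)) = (h (b i) - h (a i)) + (\<Sum>j\<in>{..<m} - {i}. h (b j) - h (a j))"
    proof -
      have "(\<Sum>j<m. h (b j)) - (\<Sum>j<m. h (a j)) = (\<Sum>j<m. h (b j) - h (a j))" by (simp add: sum_subtractf)
      also have "\<dots> = (h (b i) - h (a i)) + (\<Sum>j\<in>{..<m} - {i}. h (b j) - h (a j))"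
        using i by (subst sum.remove[of _ i]) auto
      finally show ?thesis .
    qed
    define b' where "b' = b(i := c)"
    define a' where "a' = a(i := d)"
    have sb': "(\<Sum>j<m. h (b' j)) = (\<Sum>j<m. h (b j)) - h (b i) + h c"
      unfolding b'_def by (rule sum_upd[OF i(1)])
    have sa': "(\<Sum>j<m. h (a' j)) = (\<Sum>j<m. h (a j)) - h (a i) + h d"
      unfolding a'_def by (rule sum_upd[OF i(1)])
    show ?thesis
    proof (cases "y \<le> (\<Sum>j<m. h (b' j))")
      case True
      have sub: "ins a b' \<subset> ins a b"
      proof
        show "ins a b' \<subseteq> ins a b"
          using i cd by (auto simp: ins_def b'_def split: if_splits)
        have "p \<notin> ins a b'" using cd by (simp add: ins_def b'_def pid)
        then show "ins a b' \<noteq> ins a b" using p(1) by blast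
      qed
      have card: "card (ins a b') < card (ins a b)" using psubset_card_mono[OF fin_ins sub] .
      have ai_c: "a i < c"
      proof -
        have "a i \<noteq> c"
        proof
          assume eq: "a i = c"
          from I2 i(1) consider "a i = 0" | c' where "(c', a i) \<in> F" by blast
          then show False
          proof cases
            case 1 then show False using eq cd by simp
          next
            case 2 then show False using Fdist[OF 2 i(2)] eq by simp
          qed
        qed
        then show ?thesis using i by simp
      qed
      have "inv a b' G y"
        unfolding inv_def
      proof (intro conjI allI impI)
        fix j assume j: "j < m"
        show "0 \<le> a j" "a j \<le> b' j" "b' j \<le> 1" using I1 j i cd by (auto simp: b'_def)
        show "a j = 0 \<or> (\<exists>c. (c, a j) \<in> F \<and> G \<le> h (a j) - h c)" using I2 j GM by force
        show "b' j = 1 \<or> (\<exists>d. (b' j, d) \<in> F \<and> G \<le> h d - h (b' j))"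
        proof (cases "j = i")
          case True then show ?thesis using i by (auto simp: b'_def G_def)
        next
          case False then show ?thesis using I3 j GM by (force simp: b'_def)
        qed
        show "(a j = 0 \<and> b' j = 1) \<or> \<tau> * G \<le> h (b' j) - h (a j)"
        proof (cases "j = i")
          case True
          have "a i = 0 \<or> (\<exists>c'. (c', a i) \<in> F \<and> G \<le> h (a i) - h c')" using I2 i(1) GM by force
          then have "\<tau> * G \<le> h c - h (a i)" using TL[OF i(2), of "a i"] I1 i(1) ai_c by (simp add: G_def)
          then show ?thesis using True by (simp add: b'_def)
        next
          case False then show ?thesis using I4 j tauGM by (auto simp: b'_def)
        qed
        fix c2 d2 assume "(c2, d2) \<in> F" "a j \<le> c2" "d2 \<le> b' j"
        moreover have "b' j \<le> b j" using i cd by (auto simp: b'_def)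
        ultimately show "h d2 - h c2 \<le> G" using maxG[OF j] by simp
      next
        show "(\<Sum>j<m. h (a j)) \<le> y" "y \<le> (\<Sum>j<m. h (b' j))" using I6 True by auto
      qed
      then show ?thesis using less.hyps[OF card] by blast
    next
      case False
      have sub: "ins a' b \<subset> ins a b"
      proof
        show "ins a' b \<subseteq> ins a b"
          using i cd by (auto simp: ins_def a'_def split: if_splits)
        have "p \<notin> ins a' b" using cd by (simp add: ins_def a'_def pid)
        then show "ins a' b \<noteq> ins a b" using p(1) by blast
      qed
      have card: "card (ins a' b) < card (ins a b)" using psubset_card_mono[OF fin_ins sub] .
      have d_bi: "d < b i"
      proof -
        have "b i \<noteq> d"
        proof
          assume eq: "b i = d"
          from I3 i(1) consider "b i = 1" | d' where "(b i, d') \<in> F" by blast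
          then show False
          proof cases
            case 1 then show False using eq cd by simp
          next
            case 2 then show False using Fdist[OF i(2) 2] eq by simp
          qed
        qed
        then show ?thesis using i by simp
      qed
      have "inv a' b G y"
        unfolding inv_def
      proof (intro conjI allI impI)
        fix j assume j: "j < m"
        show "0 \<le> a' j" "a' j \<le> b j" "b j \<le> 1" using I1 j i cd by (auto simp: a'_def)
        show "a' j = 0 \<or> (\<exists>c. (c, a' j) \<in> F \<and> G \<le> h (a' j) - h c)"
        proof (cases "j = i")
          case True then show ?thesis using i by (auto simp: a'_def G_def)
        next
          case False then show ?thesis using I2 j GM by (force simp: a'_def)
        qed
        show "b j = 1 \<or> (\<exists>d. (b j, d) \<in> F \<and> G \<le> h d - h (b j))" using I3 j GM by force
        show "(a' j = 0 \<and> b j = 1) \<or> \<tau> * G \<le> h (b j) - h (a' j)"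
        proof (cases "j = i")
          case True
          have "b i = 1 \<or> (\<exists>d'. (b i, d') \<in> F \<and> G \<le> h d' - h (b i))" using I3 i(1) GM by force
          then have "\<tau> * G \<le> h (b i) - h d" using TR[OF i(2), of "b i"] I1 i(1) d_bi by (simp add: G_def)
          then show ?thesis using True by (simp add: a'_def)
        next
          case False then show ?thesis using I4 j tauGM by (auto simp: a'_def)
        qed
        fix c2 d2 assume "(c2, d2) \<in> F" "a' j \<le> c2" "d2 \<le> b j"
        moreover have "a j \<le> a' j" using i cd by (auto simp: a'_def)
        ultimately show "h d2 - h c2 \<le> G" using maxG[OF j] by simp
      next
        have "(\<Sum>j<m. h (a' j)) \<le> (\<Sum>j<m. h (b' j))"
          using sa' sb' split sumcond by (simp add: G_def)
        then show "(\<Sum>j<m. h (a' j)) \<le> y" using False by simp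
        show "y \<le> (\<Sum>j<m. h (b j))" using I6 by simp
      qed
      then show ?thesis using less.hyps[OF card] by blast
    qed
  qed
qed

lemma nh_main:
  assumes "0 \<le> y" "y \<le> real m"
  shows "\<exists>x. good y x"
proof (rule step_exists)
  show "inv (\<lambda>_. 0) (\<lambda>_. 1) 1 y"
    unfolding inv_def
  proof (intro conjI allI impI)
    fix j c d assume "(c, d) \<in> F"
    then show "h d - h c \<le> 1" using Fb hm[of d 1] hm[of 0 c] h0 h1 by force
  qed (use assms h0 h1 in auto)
qed

end


context cr
begin

definition FN :: "nat \<Rightarrow> (real \<times> real) set" where
  "FN N = (\<lambda>w. (cw w r, cw w (1 - r))) ` {w. length w < N}"

lemma FN_mem: "(c, d) \<in> FN N \<longleftrightarrow> (\<exists>w. length w < N \<and> c = cw w r \<and> d = cw w (1 - r))"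
  by (auto simp: FN_def)

lemma finite_FN: "finite (FN N)"
proof -
  have "{w :: bool list. length w < N} \<subseteq> {w. set w \<subseteq> UNIV \<and> length w \<le> N}" by auto
  then have "finite {w :: bool list. length w < N}"
    using finite_lists_length_le[of "UNIV :: bool set" N] finite_subset by auto
  then show ?thesis by (simp add: FN_def)
qed

lemma level_rep:
  assumes s: "0 < s" and m2: "2 \<le> m" and mt: "1 \<le> real (m - 1) * min 1 (tau s)"
    and y: "0 \<le> y" "y \<le> real m"
  shows "\<exists>x. (\<forall>j<m. x j \<in> C N) \<and> (\<Sum>j<m. (x j) ^ s) = y"
proof -
  interpret nh "\<lambda>x. x ^ s" "FN N" m "tau s"
  proof
    show "finite (FN N)" by (rule finite_FN)
  next
    fix c d assume "(c, d) \<in> FN N"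
    then obtain w where w: "length w < N" "c = cw w r" "d = cw w (1 - r)" by (auto simp: FN_mem)
    have "0 < r ^ length w * r" using r0 by simp
    moreover have "cw w (1 - r) = cw w 1 - r ^ length w * r" by (simp add: cw_1r cw_1 algebra_simps)
    ultimately show "0 < c \<and> c < d \<and> d < 1"
      using w gap_lt[of w] cw0_nonneg[of w] cw1_le[of w] by (simp add: cw_r)
  next
    fix c d c' d' assume "(c, d) \<in> FN N" "(c', d') \<in> FN N"
    then show "c' \<noteq> d" using endpoints_distinct by (auto simp: FN_mem)
  next
    fix c d c' d' assume cd: "(c, d) \<in> FN N" and cd': "(c', d') \<in> FN N"
    then obtain w w' where w: "length w < N" "c = cw w r" "d = cw w (1 - r)"
      and w': "length w' < N" "c' = cw w' r" "d' = cw w' (1 - r)" by (auto simp: FN_mem)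
    have "c' \<in> C N" using endpoints(2)[of "w' @ [False]" N] w' snocF1 by simp
    moreover have "d' \<in> C N" using endpoints(1)[of "w' @ [True]" N] w' snocT0 by simp
    ultimately show "\<not> (c < c' \<and> c' < d) \<and> \<not> (c < d' \<and> d' < d)"
      using gap_free[OF w(1)] w by blast
  next
    show "continuous_on {0..1} (\<lambda>x::real. x ^ s)" by (intro continuous_intros)
  next
    fix x y :: real assume "0 \<le> x" "x \<le> y" "y \<le> 1"
    then show "x ^ s \<le> y ^ s" by (intro power_mono)
  next
    show "(0::real) ^ s = 0" using s by simp
    show "(1::real) ^ s = 1" by simp
  next
    fix c d b assume cd: "(c, d) \<in> FN N" and db: "d < b" "b \<le> 1"
      and bc: "b = 1 \<or> (\<exists>d'. (b, d') \<in> FN N \<and> d ^ s - c ^ s \<le> d' ^ s - b ^ s)"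
    obtain w where w: "length w < N" "c = cw w r" "d = cw w (1 - r)" using cd by (auto simp: FN_mem)
    have "b = 1 \<or> (\<exists>w'. length w' < N \<and> b = cw w' r \<and> Gp s w \<le> Gp s w')"
      using bc w by (auto simp: FN_mem Gp_def)
    then show "tau s * (d ^ s - c ^ s) \<le> b ^ s - d ^ s"
      using TPR[OF w(1) _ db(2) s] w db by (simp add: Gp_def)
  next
    fix c d a assume cd: "(c, d) \<in> FN N" and a: "0 \<le> a" "a < c"
      and ac: "a = 0 \<or> (\<exists>c'. (c', a) \<in> FN N \<and> d ^ s - c ^ s \<le> a ^ s - c' ^ s)"
    obtain w where w: "length w < N" "c = cw w r" "d = cw w (1 - r)" using cd by (auto simp: FN_mem)
    have "a = 0 \<or> (\<exists>w'. length w' < N \<and> a = cw w' (1 - r) \<and> Gp s w \<le> Gp s w')"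
      using ac w by (auto simp: FN_mem Gp_def)
    then show "tau s * (d ^ s - c ^ s) \<le> c ^ s - a ^ s"
      using TPL[OF w(1) a(1) _ s] w a by (simp add: Gp_def)
  next
    show "2 \<le> m" by (rule m2)
    show "1 \<le> real (m - 1) * min 1 (tau s)" by (rule mt)
  qed
  obtain x where x: "good y x" using nh_main[OF y] by blast
  have "x j \<in> C N" if "j < m" for j
  proof (rule avoid_in_level)
    show "0 \<le> x j" "x j \<le> 1" using x that by (auto simp: good_def)
    fix w :: "bool list" assume "length w < N"
    then have "(cw w r, cw w (1 - r)) \<in> FN N" by (auto simp: FN_mem)
    then show "\<not> (cw w r < x j \<and> x j < cw w (1 - r))" using x that unfolding good_def by blast
  qed
  then show ?thesis using x by (auto simp: good_def)
qed

end


lemma subseq_conv: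
  fixes X :: "nat \<Rightarrow> nat \<Rightarrow> real"
  assumes "\<And>n j. j < p \<Longrightarrow> X n j \<in> {0..1}"
  shows "\<exists>\<sigma> l. strict_mono \<sigma> \<and> (\<forall>j<p. (\<lambda>n. X (\<sigma> n) j) \<longlonglongrightarrow> l j)"
  using assms
proof (induction p)
  case 0
  show ?case by (intro exI[of _ id]) (auto simp: strict_mono_def)
next
  case (Suc p)
  then obtain \<sigma> l where \<sigma>: "strict_mono \<sigma>" "\<forall>j<p. (\<lambda>n. X (\<sigma> n) j) \<longlonglongrightarrow> l j" by force
  have "\<forall>n. X (\<sigma> n) p \<in> {0..1}" using Suc.prems by simp
  then obtain l' \<sigma>2 where \<sigma>2: "strict_mono \<sigma>2" "((\<lambda>n. X (\<sigma> n) p) \<circ> \<sigma>2) \<longlonglongrightarrow> l'"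
    using seq_compactE[OF compact_imp_seq_compact[OF compact_Icc]] by metis
  show ?case
  proof (intro exI conjI allI impI)
    show "strict_mono (\<sigma> \<circ> \<sigma>2)" using \<sigma>(1) \<sigma>2(1) by (rule strict_mono_o)
    fix j assume j: "j < Suc p"
    show "(\<lambda>n. X ((\<sigma> \<circ> \<sigma>2) n) j) \<longlonglongrightarrow> (l(p := l')) j"
    proof (cases "j = p")
      case True then show ?thesis using \<sigma>2(2) by (simp add: comp_def)
    next
      case False
      then have "(\<lambda>n. X (\<sigma> n) j) \<longlonglongrightarrow> l j" using \<sigma>(2) j by simp
      from LIMSEQ_subseq_LIMSEQ[OF this \<sigma>2(1)] show ?thesis using False by (simp add: comp_def)
    qed
  qed
qed

context cr
begin

lemma limit_rep:
  fixes m s :: nat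
  assumes "\<And>N. \<exists>x. (\<forall>j<m. x j \<in> C N) \<and> (\<Sum>j<m. (x j) ^ s) = y"
  shows "\<exists>x. (\<forall>j<m. \<forall>n. x j \<in> C n) \<and> (\<Sum>j<m. (x j) ^ s) = y"
proof -
  obtain X where X: "\<And>N. (\<forall>j<m. X N j \<in> C N) \<and> (\<Sum>j<m. (X N j) ^ s) = y" using assms by metis
  have "X n j \<in> {0..1}" if "j < m" for n j using X[of n] that level_01 by blast
  then obtain \<sigma> l where \<sigma>: "strict_mono \<sigma>" "\<forall>j<m. (\<lambda>n. X (\<sigma> n) j) \<longlonglongrightarrow> l j"
    using subseq_conv[of m X] by blast
  have lC: "l j \<in> C n" if "j < m" for j n
  proof (rule Lim_in_closed_set[OF closed_level])
    show "eventually (\<lambda>N. X (\<sigma> N) j \<in> C n) sequentially"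
      unfolding eventually_sequentially
    proof (intro exI allI impI)
      fix N assume "n \<le> N"
      then have "n \<le> \<sigma> N" using seq_suble[OF \<sigma>(1), of N] by simp
      then show "X (\<sigma> N) j \<in> C n" using X[of "\<sigma> N"] that level_antimono by blast
    qed
    show "(\<lambda>N. X (\<sigma> N) j) \<longlonglongrightarrow> l j" using \<sigma>(2) that by simp
  qed simp
  have "(\<lambda>N. \<Sum>j<m. (X (\<sigma> N) j) ^ s) \<longlonglongrightarrow> (\<Sum>j<m. (l j) ^ s)"
    using \<sigma>(2) by (intro tendsto_sum tendsto_power) auto
  moreover have "(\<lambda>N. \<Sum>j<m. (X (\<sigma> N) j) ^ s) = (\<lambda>N. y)" using X by simp
  ultimately have "(\<Sum>j<m. (l j) ^ s) = y" using LIMSEQ_unique tendsto_const by metis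
  then show ?thesis using lC by blast
qed

end


theorem mainTheorem3:
  fixes \<alpha> :: real and a b k :: nat
  assumes "\<alpha> > 1" and "a > 0" and "b > 0" and "a + b \<ge> 2"
    and "k > 0" and "even k"
    and "real k \<ge> Max {
      of_int \<lceil>2 * ((1 - cantor_ratio \<alpha> + cantor_ratio \<alpha> ^ nat (\<lfloor>- log (cantor_ratio \<alpha>) (real (a + b) - 1)\<rfloor> + 1)) ^ (a + b - 2)
                  * ((1 - cantor_ratio \<alpha> + cantor_ratio \<alpha> ^ nat (\<lfloor>- log (cantor_ratio \<alpha>) (real (a + b) - 1)\<rfloor> + 1)) + (real (a + b) - 1)))
               / ((1 - cantor_ratio \<alpha>) ^ (a + b - 2)
                  * ((1 - cantor_ratio \<alpha>) + (real (a + b) - 1) * (1 - cantor_ratio \<alpha> ^ nat (\<lfloor>- log (cantor_ratio \<alpha>) (real (a + b) - 1)\<rfloor> + 1))))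
               + 2\<rceil> * ((1 - cantor_ratio \<alpha>) / cantor_ratio \<alpha>) ^ (a + b - 1),
      2 * ((1 - cantor_ratio \<alpha>) / cantor_ratio \<alpha>) ^ (a + b),
      2 * (1 / (1 - cantor_ratio \<alpha>)) ^ (a + b - 1) + 2}"
  shows "{0 .. real k / 2} =
    {(\<Sum>i < k div 2. x (2 * i) ^ a * x (2 * i + 1) ^ b) | x :: nat \<Rightarrow> real.
       \<forall>i < k. x i \<in> cantor_set \<alpha>}"
proof -
  define r where "r = cantor_ratio \<alpha>"
  have r0: "0 < r" and r2: "r < 1/2"
    using assms(1) by (auto simp: r_def cantor_ratio_def field_simps)
  interpret cr r using r0 r2 by unfold_locales
  define s where "s = a + b"
  have s0: "0 < s" using assms(2) by (simp add: s_def)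
  define m where "m = k div 2"
  have km: "real k = 2 * real m" using assms(6) by (auto simp: m_def elim!: evenE)
  have "2 * ((1 - r) / r) ^ s \<le> real k"
    unfolding r_def s_def by (rule order_trans[OF Max_ge assms(7)]) auto
  then have mb: "((1 - r) / r) ^ s \<le> real m" using km by simp
  have rp: "rho ^ s * ((1 - r) / r) ^ s = 1"
    using r0 rr by (simp add: rho_def power_mult_distrib[symmetric])
  have mrho: "1 \<le> real m * rho ^ s"
  proof -
    have "rho ^ s * ((1 - r) / r) ^ s \<le> rho ^ s * real m"
      using mb less_imp_le[OF rho_pow(1)[of s]] by (intro mult_left_mono) auto
    then show ?thesis using rp by (simp add: mult.commute)
  qed
  have rs1: "rho ^ s < 1" using rho_pos rho1 s0 power_strict_decreasing[of 0 s rho] by auto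
  have "1 < real m"
  proof (rule ccontr)
    assume "\<not> 1 < real m"
    then have "real m * rho ^ s \<le> 1 * rho ^ s" using less_imp_le[OF rho_pow(1)[of s]] by (intro mult_right_mono) auto
    then show False using mrho rs1 by simp
  qed
  then have m2: "2 \<le> m" by simp
  have mt: "1 \<le> real (m - 1) * min 1 (tau s)"
  proof (cases "1 \<le> tau s")
    case True then show ?thesis using m2 by (simp add: min_def)
  next
    case False
    have "real (m - 1) = real m - 1" using m2 by simp
    moreover have "1 - rho ^ s \<le> (real m - 1) * rho ^ s" using mrho by (simp add: algebra_simps)
    ultimately have "1 \<le> real (m - 1) * (rho ^ s / (1 - rho ^ s))"
      using rs1 by (simp add: field_simps)
    then show ?thesis using False m2 by (simp add: min_def tau_def of_nat_diff)
  qed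
  have Cset: "cantor_set \<alpha> = (\<Inter>n\<in>{1..}. C n)" by (simp add: cantor_set_def r_def)
  have C01: "z \<in> cantor_set \<alpha> \<Longrightarrow> 0 \<le> z \<and> z \<le> 1" for z
    using level_01[of 1] unfolding Cset by auto
  show ?thesis
  proof (intro equalityI subsetI)
    fix y assume "y \<in> {0 .. real k / 2}"
    then have y: "0 \<le> y" "y \<le> real m" using km by auto
    have "\<exists>x. (\<forall>j<m. x j \<in> C N) \<and> (\<Sum>j<m. (x j) ^ s) = y" for N
      by (rule level_rep[OF s0 m2 mt y])
    then obtain z where z: "\<forall>j<m. \<forall>n. z j \<in> C n" "(\<Sum>j<m. (z j) ^ s) = y"
      using limit_rep by blast
    define x where "x i = z (i div 2)" for i
    have "\<forall>i<k. x i \<in> cantor_set \<alpha>"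
    proof (intro allI impI)
      fix i assume "i < k"
      then have "i div 2 < m" using assms(6) unfolding m_def by presburger
      then show "x i \<in> cantor_set \<alpha>" using z(1) unfolding Cset x_def by blast
    qed
    moreover have "(\<Sum>i < k div 2. x (2 * i) ^ a * x (2 * i + 1) ^ b) = y"
      using z(2) by (simp add: x_def m_def s_def power_add)
    ultimately show "y \<in> {(\<Sum>i < k div 2. x (2 * i) ^ a * x (2 * i + 1) ^ b) | x :: nat \<Rightarrow> real.
       \<forall>i < k. x i \<in> cantor_set \<alpha>}" by force
  next
    fix y assume "y \<in> {(\<Sum>i < k div 2. x (2 * i) ^ a * x (2 * i + 1) ^ b) | x :: nat \<Rightarrow> real.
       \<forall>i < k. x i \<in> cantor_set \<alpha>}"
    then obtain x where x: "\<forall>i<k. x i \<in> cantor_set \<alpha>"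
      and yx: "y = (\<Sum>i < k div 2. x (2 * i) ^ a * x (2 * i + 1) ^ b)" by blast
    have t: "0 \<le> x (2 * i) ^ a * x (2 * i + 1) ^ b \<and> x (2 * i) ^ a * x (2 * i + 1) ^ b \<le> 1"
      if "i < k div 2" for i
    proof -
      have "2 * i < k" "2 * i + 1 < k" using that by linarith+
      then have "0 \<le> x (2 * i) \<and> x (2 * i) \<le> 1" "0 \<le> x (2 * i + 1) \<and> x (2 * i + 1) \<le> 1"
        using x C01 by blast+
      then show ?thesis by (auto intro: mult_le_one power_le_one)
    qed
    have "y \<le> real (card {..<k div 2}) * 1" unfolding yx by (rule sum_bounded_above) (use t in auto)
    moreover have "0 \<le> y" unfolding yx by (rule sum_nonneg) (use t in auto)
    ultimately show "y \<in> {0 .. real k / 2}" using km by (simp add: m_def)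
  qed
qed

end
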